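(* Let $(V,\nu)$ be a gauged space. Then there exist a compact Hausdorff space $X$ and a linear map $\phi:V\to C_{\mathbb{R}}(X)$ such that $\nu(x)=d_{C_{\mathbb{R}}(X)}(\phi(x))$ for all $x\in V$. Consequently $\phi$ is isometric from $(V,\|\cdot\|_\nu)$ into $C_{\mathbb{R}}(X)$ with the supremum norm, and $\phi$ is an order embedding of $(V,V_{+,\nu})$ into $(C_{\mathbb{R}}(X),C_{\mathbb{R}}(X)_+)$.
   Context: $C_{\mathbb{R}}(X)$ denotes the continuous real-valued functions on $X$, with the supremum norm and cone $C_{\mathbb{R}}(X)_+$ of pointwise nonnegative functions. A gauge on a real vector space $V$ is a map $\nu:V\to[0,\infty)$ with $\nu(x+y)\le\nu(x)+\nu(y)$ and $\nu(tx)=t\nu(x)$ for all $x,y\in V$, $t>0$; its conjugate is $\overline{\nu}(x)=\nu(-x)$. A gauge is proper if for every $x\neq0$, $\nu(x)\neq0$ or $\overline{\nu}(x)\neq0$; a gauged space is a pair $(V,\nu)$ with $\nu$ a proper gauge. The induced norm is $\|x\|_\nu=\max\{\nu(x),\overline{\nu}(x)\}$ and the induced cone is $V_{+,\nu}=\ker\overline{\nu}$. For a normed ordered vector space $(W,\|\cdot\|,W_+)$, $d_W(y)=\inf\{\|y+p\|:p\in W_+\}$. An order embedding is an injective linear map $\phi$ with $\phi(x)\ge0$ iff $x\ge0$. *)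

theory Defs
  imports "HOL-Analysis.Analysis"
begin

definition gauge :: "('v::real_vector \<Rightarrow> real) \<Rightarrow> bool" where
  "gauge \<nu> \<longleftrightarrow> (\<forall>x. 0 \<le> \<nu> x) \<and> (\<forall>x y. \<nu> (x + y) \<le> \<nu> x + \<nu> y)
     \<and> (\<forall>x t. t > 0 \<longrightarrow> \<nu> (t *\<^sub>R x) = t * \<nu> x)"

definition conj_gauge :: "('v::real_vector \<Rightarrow> real) \<Rightarrow> 'v \<Rightarrow> real" where
  "conj_gauge \<nu> x = \<nu> (- x)"

definition proper_gauge :: "('v::real_vector \<Rightarrow> real) \<Rightarrow> bool" where
  "proper_gauge \<nu> \<longleftrightarrow> gauge \<nu> \<and> (\<forall>x. x \<noteq> 0 \<longrightarrow> \<nu> x \<noteq> 0 \<or> conj_gauge \<nu> x \<noteq> 0)"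

definition gauge_norm :: "('v::real_vector \<Rightarrow> real) \<Rightarrow> 'v \<Rightarrow> real" where
  "gauge_norm \<nu> x = max (\<nu> x) (conj_gauge \<nu> x)"

definition gauge_cone :: "('v::real_vector \<Rightarrow> real) \<Rightarrow> 'v set" where
  "gauge_cone \<nu> = {x. conj_gauge \<nu> x = 0}"

text \<open>$C_\mathbb{R}(X)$ for a topological space X, with elements represented as
  functions vanishing outside the carrier (extensional convention).\<close>
definition CR :: "'a topology \<Rightarrow> ('a \<Rightarrow> real) set" where
  "CR X = {f. continuous_map X euclideanreal f \<and> (\<forall>t. t \<notin> topspace X \<longrightarrow> f t = 0)}"

definition CR_pos :: "'a topology \<Rightarrow> ('a \<Rightarrow> real) set" where
  "CR_pos X = {f \<in> CR X. \<forall>t\<in>topspace X. 0 \<le> f t}"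

definition supnorm :: "'a topology \<Rightarrow> ('a \<Rightarrow> real) \<Rightarrow> real" where
  "supnorm X f = (if topspace X = {} then 0 else Sup ((\<lambda>t. \<bar>f t\<bar>) ` topspace X))"

definition dCR :: "'a topology \<Rightarrow> ('a \<Rightarrow> real) \<Rightarrow> real" where
  "dCR X y = Inf ((\<lambda>p. supnorm X (\<lambda>t. y t + p t)) ` CR_pos X)"

definition linear_into_CR :: "'a topology \<Rightarrow> ('v::real_vector \<Rightarrow> 'a \<Rightarrow> real) \<Rightarrow> bool" where
  "linear_into_CR X \<phi> \<longleftrightarrow> (\<forall>x. \<phi> x \<in> CR X)
     \<and> (\<forall>x y. \<phi> (x + y) = (\<lambda>t. \<phi> x t + \<phi> y t))
     \<and> (\<forall>c x. \<phi> (c *\<^sub>R x) = (\<lambda>t. c * \<phi> x t))"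

end

theory Submission
  imports Defs
begin

definition sublin :: "('v::real_vector \<Rightarrow> real) \<Rightarrow> bool" where
  "sublin q \<longleftrightarrow> (\<forall>x y. q (x + y) \<le> q x + q y) \<and> (\<forall>x t. t > 0 \<longrightarrow> q (t *\<^sub>R x) = t * q x)"

definition linf :: "('v::real_vector \<Rightarrow> real) \<Rightarrow> bool" where
  "linf f \<longleftrightarrow> (\<forall>x y. f (x + y) = f x + f y) \<and> (\<forall>c x. f (c *\<^sub>R x) = c * f x)"

lemma sublin_0: "sublin q \<Longrightarrow> q 0 = 0"
proof -
  assume "sublin q"
  then have "\<forall>x t. t > 0 \<longrightarrow> q (t *\<^sub>R x) = t * q x" unfolding sublin_def by blast
  then have "q ((2::real) *\<^sub>R 0) = 2 * q 0" by (metis zero_less_numeral)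
  then show ?thesis by simp
qed

lemma sublin_lb: "sublin q \<Longrightarrow> - q (- x) \<le> q x"
proof -
  assume s: "sublin q"
  have "q (x + - x) \<le> q x + q (-x)" using s unfolding sublin_def by blast
  then show ?thesis using sublin_0[OF s] by simp
qed

lemma homog_from_le:
  fixes f :: "'v::real_vector \<Rightarrow> real"
  assumes "\<And>s x. s > 0 \<Longrightarrow> f (s *\<^sub>R x) \<le> s * f x"
  shows "\<forall>x t. t > 0 \<longrightarrow> f (t *\<^sub>R x) = t * f x"
proof (intro allI impI)
  fix x and t :: real assume t: "t > 0"
  have "f x = f ((1/t) *\<^sub>R (t *\<^sub>R x))" using t by simp
  also have "\<dots> \<le> (1/t) * f (t *\<^sub>R x)" using assms[of "1/t" "t *\<^sub>R x"] t by simp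
  finally have "t * f x \<le> f (t *\<^sub>R x)" using t by (simp add: field_simps)
  with assms[OF t, of x] show "f (t *\<^sub>R x) = t * f x" by simp
qed

definition rdir :: "('v::real_vector \<Rightarrow> real) \<Rightarrow> 'v \<Rightarrow> 'v \<Rightarrow> real" where
  "rdir q y x = Inf ((\<lambda>t. q (x + t *\<^sub>R y) - t * q y) ` {0..})"

lemma rdir_bdd:
  assumes s: "sublin q"
  shows "bdd_below ((\<lambda>t. q (x + t *\<^sub>R y) - t * q y) ` {0..})"
proof (rule bdd_belowI2)
  fix t :: real assume t: "t \<in> {0..}"
  have a: "q (t *\<^sub>R y) = t * q y"
  proof (cases "t = 0")
    case True then show ?thesis using sublin_0[OF s] by simp
  next
    case False then show ?thesis using s t unfolding sublin_def by auto
  qed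
  have "q ((x + t *\<^sub>R y) + - x) \<le> q (x + t *\<^sub>R y) + q (-x)" using s unfolding sublin_def by blast
  then show "- q (-x) \<le> q (x + t *\<^sub>R y) - t * q y" using a by simp
qed

lemma rdir_le:
  assumes s: "sublin q" and t: "t \<ge> 0"
  shows "rdir q y x \<le> q (x + t *\<^sub>R y) - t * q y"
  unfolding rdir_def by (rule cInf_lower) (use t rdir_bdd[OF s] in auto)

lemma rdir_ge:
  assumes "\<And>t. t \<ge> 0 \<Longrightarrow> a \<le> q (x + t *\<^sub>R y) - t * q y"
  shows "a \<le> rdir q y x"
  unfolding rdir_def by (rule cInf_greatest) (use assms in auto)

lemma rdir_sublin:
  assumes s: "sublin q"
  shows "sublin (rdir q y)"
  unfolding sublin_def
proof (intro conjI)
  show "\<forall>x1 x2. rdir q y (x1 + x2) \<le> rdir q y x1 + rdir q y x2"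
  proof (intro allI)
    fix x1 x2
    have key: "rdir q y (x1 + x2) \<le> (q (x1 + t1 *\<^sub>R y) - t1 * q y) + (q (x2 + t2 *\<^sub>R y) - t2 * q y)"
      if "t1 \<ge> 0" "t2 \<ge> 0" for t1 t2
    proof -
      have "rdir q y (x1 + x2) \<le> q (x1 + x2 + (t1 + t2) *\<^sub>R y) - (t1 + t2) * q y"
        using rdir_le[OF s, of "t1 + t2"] that by simp
      also have "x1 + x2 + (t1 + t2) *\<^sub>R y = (x1 + t1 *\<^sub>R y) + (x2 + t2 *\<^sub>R y)"
        by (simp add: algebra_simps)
      also have "q \<dots> \<le> q (x1 + t1 *\<^sub>R y) + q (x2 + t2 *\<^sub>R y)" using s unfolding sublin_def by blast
      finally show ?thesis by (simp add: algebra_simps)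
    qed
    have "rdir q y (x1 + x2) - rdir q y x1 \<le> q (x2 + t2 *\<^sub>R y) - t2 * q y" if t2: "t2 \<ge> 0" for t2
    proof -
      have "rdir q y (x1 + x2) - (q (x2 + t2 *\<^sub>R y) - t2 * q y) \<le> rdir q y x1"
        by (rule rdir_ge) (use key t2 in fastforce)
      then show ?thesis by simp
    qed
    then have "rdir q y (x1 + x2) - rdir q y x1 \<le> rdir q y x2" by (rule rdir_ge)
    then show "rdir q y (x1 + x2) \<le> rdir q y x1 + rdir q y x2" by simp
  qed
  show "\<forall>x t. t > 0 \<longrightarrow> rdir q y (t *\<^sub>R x) = t * rdir q y x"
  proof (rule homog_from_le)
    fix s :: real and x assume sp: "s > 0"
    have "rdir q y (s *\<^sub>R x) / s \<le> q (x + t *\<^sub>R y) - t * q y" if t: "t \<ge> 0" for t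
    proof -
      have "rdir q y (s *\<^sub>R x) \<le> q (s *\<^sub>R x + (s * t) *\<^sub>R y) - (s * t) * q y"
        using rdir_le[OF s, of "s * t"] sp t by simp
      also have "s *\<^sub>R x + (s * t) *\<^sub>R y = s *\<^sub>R (x + t *\<^sub>R y)" by (simp add: algebra_simps)
      also have "q \<dots> = s * q (x + t *\<^sub>R y)" using s sp unfolding sublin_def by blast
      finally show ?thesis using sp by (simp add: field_simps)
    qed
    then have "rdir q y (s *\<^sub>R x) / s \<le> rdir q y x" by (rule rdir_ge)
    then show "rdir q y (s *\<^sub>R x) \<le> s * rdir q y x" using sp by (simp add: field_simps)
  qed
qed

lemma rdir_below: "sublin q \<Longrightarrow> rdir q y x \<le> q x"
  using rdir_le[of q 0 y x] by simp

lemma rdir_neg: "sublin q \<Longrightarrow> rdir q y (- y) \<le> - q y"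
  using rdir_le[of q 1 y "-y"] sublin_0[of q] by simp


lemma exists_minimal:
  fixes p :: "'v::real_vector \<Rightarrow> real"
  assumes sp: "sublin p"
  shows "\<exists>m\<in>{q. sublin q \<and> (\<forall>x. q x \<le> p x)}.
           \<forall>a\<in>{q. sublin q \<and> (\<forall>x. q x \<le> p x)}. (\<forall>x. a x \<le> m x) \<longrightarrow> a = m"
proof (rule predicate_Zorn)
  let ?A = "{q. sublin q \<and> (\<forall>x. q x \<le> p x)}"
  let ?P = "\<lambda>q a. \<forall>x. a x \<le> q x"
  show "partial_order_on ?A (relation_of ?P ?A)"
    unfolding partial_order_on_def preorder_on_def relation_of_def refl_on_def antisym_def trans_def
    by (auto intro!: ext intro: order.trans order.antisym)
  fix C assume C: "C \<in> Chains (relation_of ?P ?A)"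
  then have CA: "C \<subseteq> ?A" and ch: "\<And>a b. a \<in> C \<Longrightarrow> b \<in> C \<Longrightarrow> ?P a b \<or> ?P b a"
    unfolding Chains_def relation_of_def by auto
  show "\<exists>u\<in>?A. \<forall>a\<in>C. ?P a u"
  proof (cases "C = {}")
    case True then show ?thesis using sp by auto
  next
    case False
    define u where "u x = Inf ((\<lambda>q. q x) ` C)" for x
    have bdd: "bdd_below ((\<lambda>q. q x) ` C)" for x
    proof (rule bdd_belowI2)
      fix q assume "q \<in> C"
      then have "sublin q" "q (-x) \<le> p (-x)" using CA by auto
      then show "- p (-x) \<le> q x" using sublin_lb[of q x] by linarith
    qed
    have ule: "u x \<le> q x" if "q \<in> C" for q x
      unfolding u_def by (rule cInf_lower) (use that bdd in auto)
    have uge: "a \<le> u x" if "\<And>q. q \<in> C \<Longrightarrow> a \<le> q x" for a x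
      unfolding u_def by (rule cInf_greatest) (use that False in auto)
    have "sublin u" unfolding sublin_def
    proof (intro conjI)
      show "\<forall>x y. u (x + y) \<le> u x + u y"
      proof (intro allI)
        fix x y
        have key: "u (x + y) \<le> q1 x + q2 y" if "q1 \<in> C" "q2 \<in> C" for q1 q2
        proof -
          have s1: "sublin q1" "sublin q2" using that CA by auto
          show ?thesis
          proof (cases "?P q1 q2")
            case True
            have "u (x + y) \<le> q2 (x + y)" using ule that by blast
            also have "\<dots> \<le> q2 x + q2 y" using s1 unfolding sublin_def by blast
            finally have "u (x + y) \<le> q2 x + q2 y" .
            then show ?thesis using True[rule_format, of x] by linarith
          next
            case False
            then have T: "?P q2 q1" using ch that by blast
            have "u (x + y) \<le> q1 (x + y)" using ule that by blast
            also have "\<dots> \<le> q1 x + q1 y" using s1 unfolding sublin_def by blast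
            finally have "u (x + y) \<le> q1 x + q1 y" .
            then show ?thesis using T[rule_format, of y] by linarith
          qed
        qed
        have "u (x + y) - u x \<le> q2 y" if "q2 \<in> C" for q2
        proof -
          have "u (x + y) - q2 y \<le> u x" by (rule uge) (use key that in fastforce)
          then show ?thesis by simp
        qed
        then have "u (x + y) - u x \<le> u y" by (rule uge)
        then show "u (x + y) \<le> u x + u y" by simp
      qed
      show "\<forall>x t. t > 0 \<longrightarrow> u (t *\<^sub>R x) = t * u x"
      proof (rule homog_from_le)
        fix s :: real and x assume s: "s > 0"
        have "u (s *\<^sub>R x) / s \<le> q x" if "q \<in> C" for q
        proof -
          have "u (s *\<^sub>R x) \<le> q (s *\<^sub>R x)" using ule that by blast
          also have "\<dots> = s * q x" using that CA s unfolding sublin_def by blast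
          finally show ?thesis using s by (simp add: field_simps)
        qed
        then have "u (s *\<^sub>R x) / s \<le> u x" by (rule uge)
        then show "u (s *\<^sub>R x) \<le> s * u x" using s by (simp add: field_simps)
      qed
    qed
    moreover have "u x \<le> p x" for x
    proof -
      obtain q where "q \<in> C" using False by blast
      then have "u x \<le> q x" "q x \<le> p x" using ule[of q x] CA by auto
      then show ?thesis by linarith
    qed
    ultimately show ?thesis using ule by blast
  qed
qed

lemma sublin_linear_below:
  fixes p :: "'v::real_vector \<Rightarrow> real"
  assumes sp: "sublin p"
  shows "\<exists>m. linf m \<and> (\<forall>x. m x \<le> p x)"
proof -
  obtain m where m: "sublin m" "\<forall>x. m x \<le> p x"
    and min: "\<And>a. sublin a \<Longrightarrow> (\<forall>x. a x \<le> p x) \<Longrightarrow> (\<forall>x. a x \<le> m x) \<Longrightarrow> a = m"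
    using exists_minimal[OF sp] by blast
  have neg: "m (- y) = - m y" for y
  proof -
    have "rdir m y = m"
      using min[of "rdir m y"] rdir_sublin[OF m(1)] rdir_below[OF m(1)] m(2)
      by (meson order.trans)
    then have "m (-y) \<le> - m y" using rdir_neg[OF m(1), of y] by simp
    moreover have "- m y \<le> m (-y)" using sublin_lb[OF m(1), of "-y"] by simp
    ultimately show ?thesis by simp
  qed
  have add: "m (x + y) = m x + m y" for x y
  proof -
    have "m (x + y) \<le> m x + m y" using m(1) unfolding sublin_def by blast
    moreover have "m ((x + y) + - y) \<le> m (x + y) + m (-y)" using m(1) unfolding sublin_def by blast
    ultimately show ?thesis using neg[of y] by simp
  qed
  have hom: "m (c *\<^sub>R x) = c * m x" for c x
  proof -
    consider "c > 0" | "c = 0" | "c < 0" by linarith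
    then show ?thesis
    proof cases
      case 1 then show ?thesis using m(1) unfolding sublin_def by blast
    next
      case 2 then show ?thesis using sublin_0[OF m(1)] by simp
    next
      case 3
      have h: "m ((-c) *\<^sub>R x) = (-c) * m x" using m(1) 3 unfolding sublin_def
        by (metis neg_0_less_iff_less)
      have "m (c *\<^sub>R x) = m (- ((-c) *\<^sub>R x))" by simp
      also have "\<dots> = - m ((-c) *\<^sub>R x)" by (rule neg)
      finally show ?thesis using h by simp
    qed
  qed
  show ?thesis using add hom m(2) unfolding linf_def by blast
qed

lemma hahn_banach:
  fixes p :: "'v::real_vector \<Rightarrow> real"
  assumes sp: "sublin p"
  shows "\<exists>f. linf f \<and> (\<forall>x. f x \<le> p x) \<and> f x0 = p x0"
proof -
  obtain f where f: "linf f" "\<forall>x. f x \<le> rdir p x0 x"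
    using sublin_linear_below[OF rdir_sublin[OF sp, of x0]] by blast
  have fle: "f x \<le> p x" for x using f(2) rdir_below[OF sp] order.trans by blast
  have "f (- x0) \<le> - p x0" using f(2) rdir_neg[OF sp, of x0] by (meson order.trans)
  moreover have "f (- x0) = - f x0" using f(1) unfolding linf_def by (metis scaleR_minus1_left mult_minus1)
  ultimately have "p x0 \<le> f x0" by simp
  with fle[of x0] have "f x0 = p x0" by linarith
  then show ?thesis using f(1) fle by blast
qed


lemma bdd_above_abs_compact:
  fixes S :: "real set"
  assumes "compact S" shows "bdd_above (abs ` S)"
proof -
  obtain a where "\<forall>x\<in>S. norm x \<le> a" using compact_imp_bounded[OF assms] bounded_iff by blast
  then show ?thesis by (intro bdd_aboveI[of _ a]) auto
qed

theorem theorem2p13: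
  fixes \<nu> :: "'v::real_vector \<Rightarrow> real"
  assumes "proper_gauge \<nu>"
  shows "\<exists>(X :: ('v \<Rightarrow> real) topology) (\<phi> :: 'v \<Rightarrow> ('v \<Rightarrow> real) \<Rightarrow> real).
           compact_space X \<and> Hausdorff_space X \<and> linear_into_CR X \<phi>
         \<and> (\<forall>x. \<nu> x = dCR X (\<phi> x))
         \<and> (\<forall>x. gauge_norm \<nu> x = supnorm X (\<phi> x))
         \<and> inj \<phi>
         \<and> (\<forall>x. \<phi> x \<in> CR_pos X \<longleftrightarrow> x \<in> gauge_cone \<nu>)"
proof -
  have g: "gauge \<nu>" and prp: "\<And>x. x \<noteq> 0 \<Longrightarrow> \<nu> x \<noteq> 0 \<or> \<nu> (-x) \<noteq> 0"
    using assms unfolding proper_gauge_def conj_gauge_def by auto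
  have nn: "\<And>x. 0 \<le> \<nu> x" using g unfolding gauge_def by blast
  have sl: "sublin \<nu>" using g unfolding gauge_def sublin_def by blast
  define K where "K = {f::'v\<Rightarrow>real. linf f \<and> (\<forall>x. f x \<le> \<nu> x)}"
  have hb: "\<And>x. \<exists>f\<in>K. f x = \<nu> x" using hahn_banach[OF sl] unfolding K_def by blast
  have Kadd: "\<And>f x y. f \<in> K \<Longrightarrow> f (x + y) = f x + f y" unfolding K_def linf_def by blast
  have Ksc: "\<And>f c x. f \<in> K \<Longrightarrow> f (c *\<^sub>R x) = c * f x" unfolding K_def linf_def by blast
  have Kneg: "f (-x) = - f x" if "f \<in> K" for f x
    using Ksc[OF that, of "-1" x] by simp
  have Kle: "\<And>f x. f \<in> K \<Longrightarrow> f x \<le> \<nu> x" unfolding K_def by blast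
  have Kge: "- \<nu> (-x) \<le> f x" if "f \<in> K" for f x
    using Kle[OF that, of "-x"] Kneg[OF that, of x] by linarith
  have Kne: "K \<noteq> {}" using hb by blast
  define P where "P = product_topology (\<lambda>_::'v. euclideanreal) UNIV"
  have tP: "topspace P = UNIV" unfolding P_def by simp
  define X where "X = subtopology P K"
  have tX: "topspace X = K" unfolding X_def using tP by simp
  have proj: "\<And>x. continuous_map P euclideanreal (\<lambda>f. f x)"
    unfolding P_def by (rule continuous_map_product_projection) simp
  have closedK: "closedin P K"
  proof -
    have eq: "K = (\<Inter>z\<in>UNIV. {f \<in> topspace P. f (fst z + snd z) = f (fst z) + f (snd z)})
              \<inter> (\<Inter>z\<in>UNIV. {f \<in> topspace P. f (fst z *\<^sub>R snd z) = fst z * f (snd z)})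
              \<inter> (\<Inter>x\<in>UNIV. {f \<in> topspace P. f x \<in> {..\<nu> x}})"
      unfolding K_def linf_def tP by auto
    have c1: "closedin P {f \<in> topspace P. f (fst z + snd z) = f (fst z) + f (snd z)}" for z
      by (rule closedin_continuous_maps_eq[OF _ proj continuous_map_add[OF proj proj]]) simp
    have c2: "closedin P {f \<in> topspace P. f (fst z *\<^sub>R snd z) = fst z * f (snd z)}" for z
      by (rule closedin_continuous_maps_eq[OF _ proj continuous_map_real_mult_left[OF proj]]) simp
    have c3: "closedin P {f \<in> topspace P. f x \<in> {..\<nu> x}}" for x
      by (rule closedin_continuous_map_preimage[OF proj]) simp
    show ?thesis unfolding eq
      by (intro closedin_Int closedin_Inter) (use c1 c2 c3 in auto)
  qed
  have cK: "compactin P K"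
  proof (rule closed_compactin[OF _ _ closedK])
    show "compactin P (PiE UNIV (\<lambda>x. {-\<nu>(-x)..\<nu> x}))"
      unfolding P_def by (simp add: compactin_PiE)
    show "K \<subseteq> PiE UNIV (\<lambda>x. {-\<nu>(-x)..\<nu> x})" using Kle Kge by auto
  qed
  have compX: "compact_space X" unfolding X_def by (rule compact_space_subtopology[OF cK])
  have hausX: "Hausdorff_space X" unfolding X_def P_def
    by (intro Hausdorff_space_subtopology) (simp add: Hausdorff_space_product_topology)
  define \<phi> where "\<phi> x = (\<lambda>f. if f \<in> K then f x else 0)" for x
  have contX: "\<And>x. continuous_map X euclideanreal (\<lambda>f. f x)"
    unfolding X_def by (rule continuous_map_from_subtopology[OF proj])
  have phiCR: "\<phi> x \<in> CR X" for x
    unfolding CR_def tX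
  proof (intro CollectI conjI allI impI)
    show "continuous_map X euclideanreal (\<phi> x)"
      by (rule continuous_map_eq[OF contX[of x]]) (simp add: tX \<phi>_def)
  qed (simp add: \<phi>_def)
  have lin: "linear_into_CR X \<phi>"
    unfolding linear_into_CR_def using phiCR by (auto simp: \<phi>_def Kadd Ksc fun_eq_iff)
  have bddX: "bdd_above ((\<lambda>t. \<bar>h t\<bar>) ` K)" if "continuous_map X euclideanreal h" for h
  proof -
    have "compactin euclideanreal (h ` K)"
      using image_compactin[OF compX[unfolded compact_space_def] that] tX by simp
    then have "bdd_above (abs ` (h ` K))" by (intro bdd_above_abs_compact) simp
    then show ?thesis by (simp add: image_image)
  qed
  have norm: "gauge_norm \<nu> x = supnorm X (\<phi> x)" for x
  proof -
    have "supnorm X (\<phi> x) = Sup ((\<lambda>t. \<bar>t x\<bar>) ` K)"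
      unfolding supnorm_def tX using Kne by (simp add: \<phi>_def)
    also have "\<dots> = max (\<nu> x) (\<nu> (-x))"
    proof (rule cSup_eq_maximum)
      show "max (\<nu> x) (\<nu> (-x)) \<in> (\<lambda>t. \<bar>t x\<bar>) ` K"
      proof (cases "\<nu> (-x) \<le> \<nu> x")
        case True
        obtain f where "f \<in> K" "f x = \<nu> x" using hb by blast
        then show ?thesis using True nn[of x] by (intro image_eqI[of _ _ f]) auto
      next
        case False
        obtain f where "f \<in> K" "f (-x) = \<nu> (-x)" using hb by blast
        then show ?thesis using False nn[of "-x"] Kneg[of f x] by (intro image_eqI[of _ _ f]) auto
      qed
      show "\<And>y. y \<in> (\<lambda>t. \<bar>t x\<bar>) ` K \<Longrightarrow> y \<le> max (\<nu> x) (\<nu> (-x))"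
      proof -
        fix y assume "y \<in> (\<lambda>t. \<bar>t x\<bar>) ` K"
        then obtain t where t: "t \<in> K" "y = \<bar>t x\<bar>" by blast
        show "y \<le> max (\<nu> x) (\<nu> (-x))" using Kle[OF t(1), of x] Kge[OF t(1), of x] t(2) by smt
      qed
    qed
    finally show ?thesis unfolding gauge_norm_def conj_gauge_def by simp
  qed
  have dist: "\<nu> x = dCR X (\<phi> x)" for x
  proof -
    obtain f0 where f0: "f0 \<in> K" "f0 x = \<nu> x" using hb by blast
    define p0 where "p0 = (\<lambda>t. if t \<in> K then max 0 (- t x) else (0::real))"
    have p0: "p0 \<in> CR_pos X"
      unfolding CR_pos_def CR_def tX
    proof (intro CollectI conjI ballI allI impI)
      show "continuous_map X euclideanreal p0"
        by (rule continuous_map_eq[of _ _ "\<lambda>t. max 0 (- t x)"])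
           (auto simp: tX p0_def intro!: continuous_map_real_max contX continuous_map_minus)
    qed (auto simp: p0_def)
    have "dCR X (\<phi> x) = \<nu> x" unfolding dCR_def
    proof (rule cInf_eq_minimum)
      have "supnorm X (\<lambda>t. \<phi> x t + p0 t) = Sup ((\<lambda>t. \<bar>\<phi> x t + p0 t\<bar>) ` K)"
        unfolding supnorm_def tX using Kne by simp
      also have "(\<lambda>t. \<bar>\<phi> x t + p0 t\<bar>) ` K = (\<lambda>t. max (t x) 0) ` K"
        by (rule image_cong) (auto simp: \<phi>_def p0_def max_def)
      also have "Sup ((\<lambda>t. max (t x) 0) ` K) = \<nu> x"
        by (rule cSup_eq_maximum) (use f0 nn[of x] Kle in \<open>auto intro!: image_eqI[of _ _ f0]\<close>)
      finally show "\<nu> x \<in> (\<lambda>p. supnorm X (\<lambda>t. \<phi> x t + p t)) ` CR_pos X"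
        using p0 by (intro image_eqI[of _ _ p0]) auto
    next
      fix y assume "y \<in> (\<lambda>p. supnorm X (\<lambda>t. \<phi> x t + p t)) ` CR_pos X"
      then obtain p where p: "p \<in> CR_pos X" and y: "y = supnorm X (\<lambda>t. \<phi> x t + p t)" by blast
      have pc: "continuous_map X euclideanreal p" and pnn: "0 \<le> p f0"
        using p f0(1) unfolding CR_pos_def CR_def tX by auto
      have "continuous_map X euclideanreal (\<lambda>t. \<phi> x t + p t)"
        using phiCR[of x] pc unfolding CR_def by (auto intro: continuous_map_add)
      note b = bddX[OF this]
      have "\<nu> x \<le> \<bar>\<phi> x f0 + p f0\<bar>" using f0 pnn by (simp add: \<phi>_def)
      also have "\<dots> \<le> Sup ((\<lambda>t. \<bar>\<phi> x t + p t\<bar>) ` K)"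
        by (rule cSup_upper) (use b f0 in auto)
      finally show "\<nu> x \<le> y" unfolding y supnorm_def tX using Kne by simp
    qed
    then show ?thesis by simp
  qed
  have "inj \<phi>"
  proof (rule injI)
    fix x y assume e: "\<phi> x = \<phi> y"
    have fe: "f x = f y" if "f \<in> K" for f using fun_cong[OF e, of f] that by (simp add: \<phi>_def)
    have z: "f (x - y) = 0" if "f \<in> K" for f
      using fe[OF that] Kadd[OF that, of x "-y"] Kneg[OF that, of y] by simp
    obtain f1 where "f1 \<in> K" "f1 (x - y) = \<nu> (x - y)" using hb by blast
    obtain f2 where "f2 \<in> K" "f2 (-(x - y)) = \<nu> (-(x - y))" using hb by blast
    have "\<nu> (x - y) = 0" "\<nu> (-(x - y)) = 0" using z Kneg by (metis \<open>f1 \<in> K\<close> \<open>f1 (x - y) = \<nu> (x - y)\<close>,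
        metis \<open>f2 \<in> K\<close> \<open>f2 (-(x - y)) = \<nu> (-(x - y))\<close> neg_equal_0_iff_equal)
    then show "x = y" using prp[of "x - y"] by auto
  qed
  moreover have "\<phi> x \<in> CR_pos X \<longleftrightarrow> x \<in> gauge_cone \<nu>" for x
  proof
    assume "\<phi> x \<in> CR_pos X"
    then have pos: "\<And>f. f \<in> K \<Longrightarrow> 0 \<le> f x" unfolding CR_pos_def tX by (auto simp: \<phi>_def)
    obtain f where "f \<in> K" "f (-x) = \<nu> (-x)" using hb by blast
    then have "\<nu> (-x) = 0" using pos[of f] Kneg[of f x] nn[of "-x"] by simp
    then show "x \<in> gauge_cone \<nu>" unfolding gauge_cone_def conj_gauge_def by simp
  next
    assume "x \<in> gauge_cone \<nu>"
    then have "\<nu> (-x) = 0" unfolding gauge_cone_def conj_gauge_def by simp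
    then have "\<And>f. f \<in> K \<Longrightarrow> 0 \<le> f x" using Kge by (metis neg_0_equal_iff_equal)
    then show "\<phi> x \<in> CR_pos X" using phiCR[of x] unfolding CR_pos_def tX by (auto simp: \<phi>_def)
  qed
  ultimately show ?thesis using compX hausX lin dist norm by blast
qed

end
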